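(* Let $A\in\mathbb{R}^{n\times d}$ be any matrix and let $\alpha_t=t$ for $t\ge 1$. Consider the following two procedures. (Smooth Perceptron.) For $\mu>0$ and $\mathbf{v}\in\mathbb{R}^d$ let $\mathbf{q}_{\mu}(\mathbf{v})=\arg\min_{\mathbf{q}\in\Delta^n}\big[\mathbf{q}^{\top}A\mathbf{v}+\mu D_E(\mathbf{q},\tfrac{\mathbf{1}}{n})\big]$. Set $\theta_0=\tfrac23$, $\mu_0=4$, $\mathbf{v}_0=\tfrac{1}{n}A^{\top}\mathbf{1}$, $\mathbf{q}_0=\mathbf{q}_{\mu_0}(\mathbf{v}_0)$, and for $t=1,\dots,T-1$: $\mathbf{v}_t=(1-\theta_{t-1})(\mathbf{v}_{t-1}+\theta_{t-1}A^{\top}\mathbf{q}_{t-1})+\theta_{t-1}^2A^{\top}\mathbf{q}_{\mu_{t-1}}(\mathbf{v}_{t-1})$, $\mu_t=(1-\theta_{t-1})\mu_{t-1}$, $\mathbf{q}_t=(1-\theta_{t-1})\mathbf{q}_{t-1}+\theta_{t-1}\mathbf{q}_{\mu_t}(\mathbf{v}_t)$, $\theta_t=\tfrac{2}{t+3}$. (Game dynamics.) Let $g(\mathbf{w},\mathbf{p})=\mathbf{p}^{\top}A\mathbf{w}-\tfrac12\|\mathbf{w}\|_2^2$, $\mathbf{p}_0=\tfrac{\mathbf{1}}{n}$, and for $j\ge0$ let $h_j(\mathbf{w})=-g(\mathbf{w},\mathbf{p}_j)$ and $\ell_j(\mathbf{p})=g(\mathbf{w}_j,\mathbf{p})$. For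 $t=1,\dots,T$: $\mathbf{w}_t=\arg\min_{\mathbf{w}\in\mathbb{R}^d}\sum_{j=1}^{t-1}\alpha_jh_j(\mathbf{w})+\alpha_th_{t-1}(\mathbf{w})$, and then $\mathbf{p}_t=\arg\min_{\mathbf{p}\in\Delta^n}\tfrac14\sum_{s=1}^{t}\alpha_s\ell_s(\mathbf{p})+D_E(\mathbf{p},\tfrac{\mathbf{1}}{n})$. Let $\overline{\mathbf{w}}_T=\frac{\sum_{t=1}^T\alpha_t\mathbf{w}_t}{\sum_{t=1}^T\alpha_t}$. Then $\mathbf{v}_{T-1}=\overline{\mathbf{w}}_T$ and $\mathbf{q}_{T-1}=\frac{\sum_{t=1}^{T}\alpha_t\mathbf{p}_t}{\sum_{t=1}^{T}\alpha_t}$.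
   Context: $\Delta^n$ is the probability simplex in $\mathbb{R}^n$, $\mathbf{1}$ is the all-ones vector. $E(\mathbf{p})=\sum_i p_i\log p_i$ is the negative entropy and $D_E(\mathbf{p},\mathbf{q})=\sum_i p_i\log(p_i/q_i)$ its Bregman divergence on $\Delta^n$ (the KL divergence). *)

theory Defs
  imports "HOL-Analysis.Analysis"
begin

definition prob_simplex :: "(real ^ 'n) set" where
  "prob_simplex = {q. (\<forall>i. 0 \<le> q $ i) \<and> (\<Sum>i\<in>UNIV. q $ i) = 1}"

definition unif :: "real ^ 'n" where
  "unif = (\<chi> i. 1 / real CARD('n))"

text \<open>Bregman divergence of the negative entropy (KL divergence), with 0 log 0 = 0
  (automatic since 0 * _ = 0).\<close>
definition KL :: "real ^ 'n \<Rightarrow> real ^ 'n \<Rightarrow> real" where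
  "KL p q = (\<Sum>i\<in>UNIV. p $ i * ln (p $ i / q $ i))"

text \<open>arg min of f over S (the minimizers here are unique).\<close>
definition argmin :: "'a set \<Rightarrow> ('a \<Rightarrow> real) \<Rightarrow> 'a" where
  "argmin S f = (SOME x. x \<in> S \<and> (\<forall>y\<in>S. f x \<le> f y))"

definition qmu :: "real ^ 'd ^ 'n \<Rightarrow> real \<Rightarrow> real ^ 'd \<Rightarrow> real ^ 'n" where
  "qmu A \<mu> v = argmin prob_simplex (\<lambda>q. q \<bullet> (A *v v) + \<mu> * KL q unif)"

definition gpay :: "real ^ 'd ^ 'n \<Rightarrow> real ^ 'd \<Rightarrow> real ^ 'n \<Rightarrow> real" where
  "gpay A w p = p \<bullet> (A *v w) - 1/2 * (norm w)\<^sup>2"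

end

theory Submission
  imports Defs
begin


lemma argmin_affine:
  assumes "c > 0"
  shows "argmin S (\<lambda>x. c * f x + d) = argmin S f"
  unfolding argmin_def using assms by (simp add: mult_le_cancel_left_pos)

lemma argmin_quad:
  fixes b :: "'a::real_inner"
  assumes c: "c > 0"
  shows "argmin UNIV (\<lambda>x. c/2 * (norm x)\<^sup>2 - inner b x) = (1/c) *\<^sub>R b"
proof -
  let ?x0 = "(1/c) *\<^sub>R b"
  let ?f = "\<lambda>x. c/2 * (norm x)\<^sup>2 - inner b x"
  have id: "?f x = c/2 * (norm (x - ?x0))\<^sup>2 - (norm b)\<^sup>2 / (2*c)" for x
    using c by (simp add: power2_norm_eq_inner inner_diff_left inner_diff_right inner_commute field_simps)
  show ?thesis unfolding argmin_def
  proof (rule some_equality)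
    show "?x0 \<in> UNIV \<and> (\<forall>y\<in>UNIV. ?f ?x0 \<le> ?f y)"
    proof (intro conjI ballI UNIV_I)
      fix y show "?f ?x0 \<le> ?f y" using c by (simp only: id) simp
    qed
  next
    fix x assume "x \<in> UNIV \<and> (\<forall>y\<in>UNIV. ?f x \<le> ?f y)"
    then have "?f x \<le> ?f ?x0" by blast
    then have "c/2 * (norm (x - ?x0))\<^sup>2 \<le> 0" using c by (simp only: id) simp
    then have "(norm (x - ?x0))\<^sup>2 \<le> 0" using c
      by (simp add: mult_le_0_iff)
    then show "x = ?x0" by simp
  qed
qed



lemma coef_v:
  fixes x X Y Z a b th :: real
  assumes "x \<ge> 0" "a = 2/((x+1)*(x+2))" "b = 2/((x+2)*(x+3))" "th = 2/(x+3)"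
  shows "(1-th)*(a*X + th*(a*Y)) + th^2*Z = b*(X + (x+2)*(b*(Y + (x+2)*Z)))"
proof -
  obtain p1 p2 p3 where p: "p1 = x+1" "p2 = x+2" "p3 = x+3" by blast
  have h: "p1 \<noteq> 0" "p2 \<noteq> 0" "p3 \<noteq> 0" using assms p by linarith+
  have "(1-2/p3)*(2/(p1*p2)*X + 2/p3*(2/(p1*p2)*Y)) + (2/p3)^2*Z = 2/(p2*p3)*(X + p2*(2/(p2*p3)*(Y + p2*Z)))"
    using h by (simp add: field_simps power2_eq_square) (simp add: p algebra_simps)
  then show ?thesis unfolding assms(2-4) p .
qed
lemma coef_q:
  fixes x X Y a b th :: real
  assumes "x \<ge> 0" "a = 2/((x+1)*(x+2))" "b = 2/((x+2)*(x+3))" "th = 2/(x+3)"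
  shows "(1-th)*(a*X) + th*Y = b*(X + (x+2)*Y)"
proof -
  obtain p1 p2 p3 where p: "p1 = x+1" "p2 = x+2" "p3 = x+3" by blast
  have h: "p1 \<noteq> 0" "p2 \<noteq> 0" "p3 \<noteq> 0" using assms p by linarith+
  have "(1-2/p3)*(2/(p1*p2)*X) + 2/p3*Y = 2/(p2*p3)*(X + p2*Y)"
    using h by (simp add: field_simps power2_eq_square) (simp add: p algebra_simps)
  then show ?thesis unfolding assms(2-4) p .
qed

lemma coef_m:
  fixes x :: real
  assumes "x \<ge> 0"
  shows "(1 - 2/(x+3)) * (8/((x+1)*(x+2))) = 8/((x+2)*(x+3))"
proof -
  obtain p1 p2 p3 where p: "p1 = x+1" "p2 = x+2" "p3 = x+3" by blast
  have h: "p1 \<noteq> 0" "p2 \<noteq> 0" "p3 \<noteq> 0" using assms p by linarith+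
  have "(1 - 2/p3) * (8/(p1*p2)) = 8/(p2*p3)"
    using h by (simp add: field_simps) (simp add: p algebra_simps)
  then show ?thesis unfolding p .
qed

theorem proposition1:
  fixes A :: "real ^ 'd ^ 'n" and T :: nat
    and v :: "nat \<Rightarrow> real ^ 'd" and q :: "nat \<Rightarrow> real ^ 'n"
    and \<mu> \<theta> :: "nat \<Rightarrow> real"
    and w :: "nat \<Rightarrow> real ^ 'd" and p :: "nat \<Rightarrow> real ^ 'n"
    and \<alpha> :: "nat \<Rightarrow> real"
  assumes T1: "1 \<le> T"
    and alpha: "\<forall>t\<ge>1. \<alpha> t = real t"
    and theta: "\<forall>t. \<theta> t = 2 / (real t + 3)"
    and mu0: "\<mu> 0 = 4"
    and v0: "v 0 = (1 / real CARD('n)) *\<^sub>R (transpose A *v (\<chi> i. 1))"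
    and q0: "q 0 = qmu A (\<mu> 0) (v 0)"
    and vstep: "\<forall>t. 1 \<le> t \<and> t \<le> T - 1 \<longrightarrow>
        v t = (1 - \<theta> (t-1)) *\<^sub>R (v (t-1) + \<theta> (t-1) *\<^sub>R (transpose A *v q (t-1)))
              + (\<theta> (t-1))\<^sup>2 *\<^sub>R (transpose A *v qmu A (\<mu> (t-1)) (v (t-1)))"
    and mustep: "\<forall>t. 1 \<le> t \<and> t \<le> T - 1 \<longrightarrow> \<mu> t = (1 - \<theta> (t-1)) * \<mu> (t-1)"
    and qstep: "\<forall>t. 1 \<le> t \<and> t \<le> T - 1 \<longrightarrow>
        q t = (1 - \<theta> (t-1)) *\<^sub>R q (t-1) + \<theta> (t-1) *\<^sub>R qmu A (\<mu> t) (v t)"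
    and p0: "p 0 = unif"
    and wstep: "\<forall>t. 1 \<le> t \<and> t \<le> T \<longrightarrow>
        w t = argmin UNIV (\<lambda>x. (\<Sum>j=1..t-1. \<alpha> j * (- gpay A x (p j)))
                                 + \<alpha> t * (- gpay A x (p (t-1))))"
    and pstep: "\<forall>t. 1 \<le> t \<and> t \<le> T \<longrightarrow>
        p t = argmin prob_simplex (\<lambda>y. 1/4 * (\<Sum>s=1..t. \<alpha> s * gpay A (w s) y) + KL y unif)"
  shows "v (T-1) = (1 / (\<Sum>t=1..T. \<alpha> t)) *\<^sub>R (\<Sum>t=1..T. \<alpha> t *\<^sub>R w t)
     \<and> q (T-1) = (1 / (\<Sum>t=1..T. \<alpha> t)) *\<^sub>R (\<Sum>t=1..T. \<alpha> t *\<^sub>R p t)"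
  proof -
  define S where "S t = (\<Sum>s=1..t. \<alpha> s)" for t
  define W where "W t = (\<Sum>s=1..t. \<alpha> s *\<^sub>R w s)" for t
  define P where "P t = (\<Sum>s=1..t. \<alpha> s *\<^sub>R p s)" for t
  obtain B where B: "B = transpose A" by blast
  have dotB: "y \<bullet> (A *v x) = (B *v y) \<bullet> x" for y x
    by (simp add: B dot_lmul_matrix)
  have linA: "linear (\<lambda>x. A *v x)" by simp
  have linB: "linear (\<lambda>x. B *v x)" by simp
  have S_Suc: "S (Suc t) = S t + real (Suc t)" for t by (simp add: S_def alpha)
  have S_eq: "S t = real t * (real t + 1) / 2" for t
    by (induction t) (simp_all add: S_Suc, simp add: S_def, simp add: field_simps)
  have W_Suc: "W (Suc t) = W t + real (Suc t) *\<^sub>R w (Suc t)" for t by (simp add: W_def alpha)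
  have P_Suc: "P (Suc t) = P t + real (Suc t) *\<^sub>R p (Suc t)" for t by (simp add: P_def alpha)
  have F1: "w t = (1 / S t) *\<^sub>R (B *v (P (t-1) + real t *\<^sub>R p (t-1)))" if t: "1 \<le> t" "t \<le> T" for t
  proof -
    have "(\<lambda>x. (\<Sum>j=1..t-1. \<alpha> j * (- gpay A x (p j))) + \<alpha> t * (- gpay A x (p (t-1))))
        = (\<lambda>x. S t / 2 * (norm x)\<^sup>2 - (B *v (P (t-1) + real t *\<^sub>R p (t-1))) \<bullet> x)"
    proof
      fix x
      have e1: "(B *v (P (t-1) + real t *\<^sub>R p (t-1))) \<bullet> x
          = (\<Sum>j=1..t-1. \<alpha> j * ((B *v p j) \<bullet> x)) + real t * ((B *v p (t-1)) \<bullet> x)"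
        by (simp add: P_def linear_sum[OF linB] matrix_vector_right_distrib matrix_vector_mult_scaleR
            inner_sum_left inner_add_left)
      have e2: "S t = S (t-1) + real t" using S_Suc[of "t-1"] t by simp
      have e3: "(\<Sum>j=1..t-1. \<alpha> j * (- gpay A x (p j)))
          = S (t-1) / 2 * (norm x)\<^sup>2 - (\<Sum>j=1..t-1. \<alpha> j * ((B *v p j) \<bullet> x))"
      proof -
        have "(\<Sum>j=1..t-1. \<alpha> j * (- gpay A x (p j)))
            = (\<Sum>j=1..t-1. \<alpha> j / 2 * (norm x)\<^sup>2 - \<alpha> j * ((B *v p j) \<bullet> x))"
          by (rule sum.cong) (simp_all add: gpay_def dotB algebra_simps)
        also have "\<dots> = S (t-1) / 2 * (norm x)\<^sup>2 - (\<Sum>j=1..t-1. \<alpha> j * ((B *v p j) \<bullet> x))"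
          by (simp add: sum_subtractf S_def sum_divide_distrib sum_distrib_right)
        finally show ?thesis .
      qed
      show "(\<Sum>j=1..t-1. \<alpha> j * (- gpay A x (p j))) + \<alpha> t * (- gpay A x (p (t-1)))
          = S t / 2 * (norm x)\<^sup>2 - (B *v (P (t-1) + real t *\<^sub>R p (t-1))) \<bullet> x"
        unfolding e1 e2 e3 using t by (simp add: gpay_def dotB alpha algebra_simps)
    qed
    moreover have "S t > 0" using t by (simp add: S_eq)
    ultimately show ?thesis using wstep t argmin_quad by simp
  qed
  have F2: "p t = qmu A (8 / (real t * (real t + 1))) ((1 / S t) *\<^sub>R W t)" if t: "1 \<le> t" "t \<le> T" for t
  proof -
    have Sp: "S t > 0" using t by (simp add: S_eq)
    let ?f = "\<lambda>y. y \<bullet> (A *v ((1 / S t) *\<^sub>R W t)) + 8 / (real t * (real t + 1)) * KL y unif"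
    let ?d = "- (1/4) * (\<Sum>s=1..t. \<alpha> s * (1/2 * (norm (w s))\<^sup>2))"
    have "(\<lambda>y. 1/4 * (\<Sum>s=1..t. \<alpha> s * gpay A (w s) y) + KL y unif) = (\<lambda>y. S t / 4 * ?f y + ?d)"
    proof
      fix y
      have e1: "y \<bullet> (A *v ((1 / S t) *\<^sub>R W t)) = (1 / S t) * (\<Sum>s=1..t. \<alpha> s * (y \<bullet> (A *v w s)))"
        by (simp add: W_def linear_sum[OF linA] matrix_vector_mult_scaleR inner_sum_right)
      have e2: "(\<Sum>s=1..t. \<alpha> s * gpay A (w s) y) = (\<Sum>s=1..t. \<alpha> s * (y \<bullet> (A *v w s)))
          - (\<Sum>s=1..t. \<alpha> s * (1/2 * (norm (w s))\<^sup>2))"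
        by (simp add: gpay_def sum_subtractf[symmetric] right_diff_distrib)
      have e3: "S t / 4 * (8 / (real t * (real t + 1))) = 1"
      proof -
        have "real t * (real t + 1) > 0" using t by simp
        then show ?thesis by (simp add: S_eq field_simps)
      qed
      show "1/4 * (\<Sum>s=1..t. \<alpha> s * gpay A (w s) y) + KL y unif = S t / 4 * ?f y + ?d"
        unfolding e1 e2 using Sp e3 by (simp add: algebra_simps)
    qed
    then have "p t = argmin prob_simplex (\<lambda>y. S t / 4 * ?f y + ?d)" using pstep t by simp
    also have "\<dots> = argmin prob_simplex ?f" by (rule argmin_affine) (use Sp in simp)
    finally show ?thesis by (simp add: qmu_def)
  qed
  have vstepB: "v t = (1 - \<theta> (t-1)) *\<^sub>R (v (t-1) + \<theta> (t-1) *\<^sub>R (B *v q (t-1)))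
              + (\<theta> (t-1))\<^sup>2 *\<^sub>R (B *v qmu A (\<mu> (t-1)) (v (t-1)))" if "1 \<le> t" "t \<le> T - 1" for t
    using vstep that unfolding B by blast
  have main: "Suc k \<le> T \<Longrightarrow> v k = (1 / S (Suc k)) *\<^sub>R W (Suc k) \<and> q k = (1 / S (Suc k)) *\<^sub>R P (Suc k)
      \<and> \<mu> k = 8 / (real (Suc k) * (real (Suc k) + 1))" for k
  proof (induction k)
    case 0
    have S1: "S 1 = 1" by (simp add: S_eq)
    have P0: "P 0 = 0" by (simp add: P_def)
    have w1: "w 1 = B *v unif" using F1[of 1] 0 S1 P0 p0 by simp
    have u: "unif = (1 / real CARD('n)) *\<^sub>R (\<chi> i. 1 :: real ^ 'n)" by (simp add: unif_def vec_eq_iff)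
    have vv: "v 0 = (1 / S 1) *\<^sub>R W 1" using v0 unfolding B[symmetric] 
      by (simp add: S1[unfolded One_nat_def] W_def alpha w1[unfolded One_nat_def] u matrix_vector_mult_scaleR)
    have p1: "p 1 = qmu A 4 ((1 / S 1) *\<^sub>R W 1)" using F2[of 1] 0 by simp
    have qq: "q 0 = (1 / S 1) *\<^sub>R P 1" using q0 mu0 vv p1 by (simp add: S1[unfolded One_nat_def] P_def alpha)
    show ?case using vv qq mu0 by simp
  next
    case (Suc k)
    then have IH: "v k = (1 / S (Suc k)) *\<^sub>R W (Suc k)" "q k = (1 / S (Suc k)) *\<^sub>R P (Suc k)"
      "\<mu> k = 8 / (real (Suc k) * (real (Suc k) + 1))" by auto
    have th: "\<theta> k = 2 / (real k + 3)" using theta by simp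
    have pS: "qmu A (\<mu> k) (v k) = p (Suc k)" using F2[of "Suc k"] Suc.prems IH by simp
    have vS: "v (Suc k) = (1 - \<theta> k) *\<^sub>R (v k + \<theta> k *\<^sub>R (B *v q k)) + (\<theta> k)\<^sup>2 *\<^sub>R (B *v p (Suc k))"
      using vstepB[of "Suc k"] Suc.prems pS by simp
    have wS: "w (Suc (Suc k)) = (1 / S (Suc (Suc k))) *\<^sub>R (B *v (P (Suc k) + real (Suc (Suc k)) *\<^sub>R p (Suc k)))"
      using F1[of "Suc (Suc k)"] Suc.prems by simp
    have rS: "real (Suc (Suc k)) = real k + 2" by simp
    have cS: "1 / S (Suc k) = 2 / ((real k + 1) * (real k + 2))" "1 / S (Suc (Suc k)) = 2 / ((real k + 2) * (real k + 3))"
      by (simp_all add: S_eq field_simps)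
    have v2: "v (Suc k) = (1 / S (Suc (Suc k))) *\<^sub>R W (Suc (Suc k))"
    proof -
      have "v (Suc k) $ i = ((1 / S (Suc (Suc k))) *\<^sub>R W (Suc (Suc k))) $ i" for i
        unfolding vS W_Suc[of "Suc k"] wS IH rS
        by (simp only: matrix_vector_right_distrib matrix_vector_mult_scaleR vector_add_component vector_scaleR_component real_scaleR_def)
          (rule coef_v, simp_all add: cS th)
      then show ?thesis by (simp add: vec_eq_iff)
    qed
    have m2: "\<mu> (Suc k) = 8 / (real (Suc (Suc k)) * (real (Suc (Suc k)) + 1))"
    proof -
      have "\<mu> (Suc k) = (1 - \<theta> k) * \<mu> k" using mustep Suc.prems by auto
      moreover have "8 / (real (Suc k) * (real (Suc k) + 1)) = 8/((real k+1)*(real k+2))"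
        "8 / (real (Suc (Suc k)) * (real (Suc (Suc k)) + 1)) = 8/((real k+2)*(real k+3))"
        by (simp_all add: algebra_simps)
      ultimately show ?thesis unfolding IH th using coef_m[of "real k"] by simp
    qed
    have p2: "qmu A (\<mu> (Suc k)) (v (Suc k)) = p (Suc (Suc k))"
      using F2[of "Suc (Suc k)"] Suc.prems v2 m2 by simp
    have qS: "q (Suc k) = (1 - \<theta> k) *\<^sub>R q k + \<theta> k *\<^sub>R p (Suc (Suc k))"
      using qstep Suc.prems p2 by auto
    have q2: "q (Suc k) = (1 / S (Suc (Suc k))) *\<^sub>R P (Suc (Suc k))"
    proof -
      have "q (Suc k) $ i = ((1 / S (Suc (Suc k))) *\<^sub>R P (Suc (Suc k))) $ i" for i
        unfolding qS P_Suc[of "Suc k"] IH rS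
        by (simp only: vector_add_component vector_scaleR_component real_scaleR_def)
          (rule coef_q, simp_all add: cS th)
      then show ?thesis by (simp add: vec_eq_iff)
    qed
    show ?case using v2 q2 m2 by simp
  qed
  from main[of "T - 1"] T1 show ?thesis by (simp add: S_def W_def P_def)
qed

end
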